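(* Under the standing AoI model, almost surely $$\lim_{\tau\to\infty}\frac1\tau\int_0^\tau\Delta(t)\,dt=\bar\Delta:=\frac{\rho\beta}{2(\alpha\rho+\beta)}\left(\frac{2}{\rho^2}+\frac{2\alpha}{\rho\beta}+\frac{\alpha^2+\alpha}{\beta^2}\right)+\frac{\alpha}{\beta}+T_{\rm tx}.$$ Equivalently, $\bar\Delta=\mathbb{E}[Q_k]/\mathbb{E}[T_k]$, where $Q_k=\tfrac12(\Delta_{p,k}^2-L_{k-1}^2)$ is the area under $\Delta$ on $[U_{k-1},U_k)$.
   Context: Standing AoI model. Fix $\alpha>0$, $\beta>0$, $\rho>0$ and a constant $T_{\rm tx}\ge0$. Let $(X_k)_{k\ge0}$ be i.i.d. Gamma$(\alpha,\beta)$ random variables, with density $f(x)=\frac{\beta^\alpha}{\Gamma(\alpha)}x^{\alpha-1}e^{-\beta x}$ for $x>0$; these are the consensus latencies. Let $(T_{{\rm int},k})_{k\ge1}$ be i.i.d. exponential random variables with rate $\rho$ (mean $1/\rho$), independent of $(X_k)$. For $k\ge1$ define: - the total latency $L_k=X_k+T_{\rm tx}$, with also $L_0=X_0+T_{\rm tx}$; - the inter-update time $T_k=X_k+T_{{\rm int},k}$; - the peak AoI $\Delta_{p,k}=X_{k-1}+T_{{\rm int},k}+L_k=X_{k-1}+X_k+T_{{\rm int},k}+T_{\rm tx}$. Let $U_0=0$ and $U_k=U_{k-1}+T_k$. The AoI process is $\Delta(t)=L_{k-1}+(t-U_{k-1})$ for $t\in[U_{k-1},U_k)$, $k\ge1$.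 It increases with slope 1 from $L_{k-1}$ to $\Delta_{p,k}$ on each update interval. *)

theory Defs
  imports "HOL-Probability.Probability"
begin

definition gamma_density :: "real \<Rightarrow> real \<Rightarrow> real \<Rightarrow> real" where
  "gamma_density a b x =
     (if 0 < x then b powr a / Gamma a * x powr (a - 1) * exp (- b * x) else 0)"

definition upd_time :: "(nat \<Rightarrow> real) \<Rightarrow> (nat \<Rightarrow> real) \<Rightarrow> nat \<Rightarrow> real" where
  "upd_time X Tint k = (\<Sum>i\<in>{1..k}. X i + Tint i)"

text \<open>AoI sample path: Delta(t) = L_{k-1} + (t - U_{k-1}) on [U_{k-1}, U_k), k >= 1,
  where L_j = X j + Ttx.\<close>
definition aoi :: "(nat \<Rightarrow> real) \<Rightarrow> (nat \<Rightarrow> real) \<Rightarrow> real \<Rightarrow> real \<Rightarrow> real" where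
  "aoi X Tint Ttx t =
     (let k = (THE k. 1 \<le> k \<and> upd_time X Tint (k - 1) \<le> t \<and> t < upd_time X Tint k)
      in (X (k - 1) + Ttx) + (t - upd_time X Tint (k - 1)))"

definition peak_aoi :: "(nat \<Rightarrow> real) \<Rightarrow> (nat \<Rightarrow> real) \<Rightarrow> real \<Rightarrow> nat \<Rightarrow> real" where
  "peak_aoi X Tint Ttx k = X (k - 1) + X k + Tint k + Ttx"

definition avg_aoi :: "real \<Rightarrow> real \<Rightarrow> real \<Rightarrow> real \<Rightarrow> real" where
  "avg_aoi a b r Ttx =
     r * b / (2 * (a * r + b)) * (2 / r^2 + 2 * a / (r * b) + (a^2 + a) / b^2) + a / b + Ttx"

end

theory Submission
  imports Defs "HOL-Library.Discrete_Functions"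
begin


lemma gamma_density_nonneg: "0 < a \<Longrightarrow> 0 < b \<Longrightarrow> 0 \<le> gamma_density a b x"
  by (auto simp: gamma_density_def)

lemma borel_measurable_gamma_density[measurable]: "gamma_density a b \<in> borel_measurable borel"
  unfolding gamma_density_def by measurable

lemma gamma_nn_moment:
  fixes a b :: real and i :: nat
  assumes a: "a > 0" and b: "b > 0"
  shows "(\<integral>\<^sup>+x. ennreal (gamma_density a b x * x ^ i) \<partial>lborel) = ennreal (Gamma (a + i) / (Gamma a * b ^ i))"
proof -
  define s where "s = a + real i"
  have s: "s > 0" using a by (simp add: s_def)
  have GI: "((\<lambda>t. t powr (s - 1) / exp t) has_integral Gamma s) {0..}"
    by (rule Gamma_integral_real[OF s])
  have N: "(\<integral>\<^sup>+x. ennreal (x powr (s - 1) / exp x) * indicator {0..} x \<partial>lborel) = ennreal (Gamma s)"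
    by (rule nn_integral_has_integral_lebesgue'[OF _ GI]) simp
  define K where "K = b / (Gamma a * b ^ i)"
  have K: "K \<ge> 0" using a b by (simp add: K_def)
  have eq: "ennreal (gamma_density a b (0 + (1/b) * x) * (0 + (1/b) * x) ^ i)
        = ennreal K * (ennreal (x powr (s - 1) / exp x) * indicator {0..} x)" for x
  proof (cases "x > 0")
    case True
    have "gamma_density a b (x / b) * (x / b) ^ i
        = b powr a / Gamma a * ((x / b) powr (a - 1) * (x / b) powr real i) * exp (- x)"
      using True b by (simp add: gamma_density_def powr_realpow)
    also have "(x / b) powr (a - 1) * (x / b) powr real i = x powr (s - 1) / b powr (s - 1)"
      using True b by (simp add: powr_add[symmetric] powr_divide s_def algebra_simps)
    also have "b powr a / Gamma a * (x powr (s - 1) / b powr (s - 1)) * exp (- x)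
        = (b powr a / b powr (s - 1)) / Gamma a * (x powr (s - 1) / exp x)"
      by (simp add: exp_minus field_simps)
    also have "b powr a / b powr (s - 1) = b / b ^ i"
      using b by (simp add: powr_diff s_def powr_realpow[symmetric] powr_add)
    finally show ?thesis using True K
      by (simp add: K_def ennreal_mult'[symmetric] field_simps)
  next
    case False
    then have "\<not> 0 < x / b" using b False by (simp add: zero_less_divide_iff)
    then show ?thesis using False b by (auto simp: gamma_density_def indicator_def)
  qed
  have "(\<integral>\<^sup>+x. ennreal (gamma_density a b x * x ^ i) \<partial>lborel)
      = ennreal \<bar>1/b\<bar> * (\<integral>\<^sup>+x. ennreal (gamma_density a b (0 + (1/b) * x) * (0 + (1/b) * x) ^ i) \<partial>lborel)"
    by (rule nn_integral_real_affine) (use b in auto)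
  also have "\<dots> = ennreal (1/b) * (ennreal K * ennreal (Gamma s))"
    unfolding eq by (subst nn_integral_cmult) (use b in \<open>auto simp: N\<close>)
  also have "\<dots> = ennreal (Gamma (a + i) / (Gamma a * b ^ i))"
    using b K by (simp add: ennreal_mult'[symmetric] K_def s_def)
  finally show ?thesis .
qed

lemma (in prob_space) gamma_moment:
  fixes a b :: real and i :: nat
  assumes a: "a > 0" and b: "b > 0" and D: "distributed M lborel Y (\<lambda>x. ennreal (gamma_density a b x))"
  shows "has_bochner_integral M (\<lambda>x. Y x ^ i) (Gamma (a + i) / (Gamma a * b ^ i))"
proof (rule has_bochner_integral_nn_integral)
  show "AE x in M. 0 \<le> Y x ^ i"
    by (subst distributed_AE2[OF D]) (auto simp: gamma_density_def)
  show "(\<integral>\<^sup>+ x. ennreal (Y x ^ i) \<partial>M) = ennreal (Gamma (a + i) / (Gamma a * b ^ i))"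
    using gamma_nn_moment[OF a b, of i]
    by (subst distributed_nn_integral[symmetric, OF D]) (auto simp: ennreal_mult' gamma_density_nonneg[OF a b])
  show "0 \<le> Gamma (a + real i) / (Gamma a * b ^ i)" using a b by simp
qed (insert distributed_measurable[OF D], auto)

lemma (in prob_space) gamma_nonneg_AE:
  assumes b: "b > 0" and D: "distributed M lborel Y (\<lambda>x. ennreal (gamma_density a b x))"
  shows "AE x in M. 0 \<le> Y x"
  by (subst distributed_AE2[OF D]) (auto simp: gamma_density_def)

lemma (in prob_space) exp_nonneg_AE:
  assumes D: "distributed M lborel Y (\<lambda>x. ennreal (exponential_density r x))"
  shows "AE x in M. 0 \<le> Y x"
  by (subst distributed_AE2[OF D]) (auto simp: exponential_density_def erlang_density_def)



lemma interp_squares: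
  fixes s :: "nat \<Rightarrow> real"
  assumes mono: "\<And>n. s n \<le> s (Suc n)" and s0: "s 0 = 0"
    and lim: "(\<lambda>m. s (m^2) / real (m^2)) \<longlonglongrightarrow> \<mu>"
  shows "(\<lambda>n. s n / real n) \<longlonglongrightarrow> \<mu>"
proof -
  have inc: "incseq s" by (rule incseq_SucI) (rule mono)
  have mo: "a \<le> b \<Longrightarrow> s a \<le> s b" for a b using inc by (simp add: incseq_def)
  have nn: "0 \<le> s n" for n using mo[of 0 n] s0 by simp
  define r where "r n = floor_sqrt n" for n
  have r: "filterlim r at_top sequentially"
    unfolding filterlim_at_top
  proof (intro allI)
    fix m show "eventually (\<lambda>n. m \<le> r n) sequentially"
      unfolding eventually_sequentially
      by (rule exI[of _ "m^2"]) (auto simp: r_def le_floor_sqrtI le_trans)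
  qed
  define lo where "lo m = s (m^2) / real (m^2) * (real m ^ 2 / real (Suc m) ^ 2)" for m
  define hi where "hi m = s ((Suc m)^2) / real ((Suc m)^2) * (real (Suc m) ^ 2 / real m ^ 2)" for m
  have q1: "(\<lambda>m. real m ^ 2 / real (Suc m) ^ 2) \<longlonglongrightarrow> 1"
    using tendsto_power[OF LIMSEQ_n_over_Suc_n, of 2] by (simp add: power_divide)
  have q2: "(\<lambda>m. real (Suc m) ^ 2 / real m ^ 2) \<longlonglongrightarrow> 1"
    using tendsto_power[OF LIMSEQ_Suc_n_over_n, of 2] by (simp add: power_divide)
  have lo: "lo \<longlonglongrightarrow> \<mu>"
    unfolding lo_def by (rule tendsto_eq_rhs[OF tendsto_mult[OF lim q1]]) simp
  have hi: "hi \<longlonglongrightarrow> \<mu>"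
    unfolding hi_def by (rule tendsto_eq_rhs[OF tendsto_mult[OF LIMSEQ_Suc[OF lim] q2]]) simp
  have lor: "(\<lambda>n. lo (r n)) \<longlonglongrightarrow> \<mu>" by (rule filterlim_compose[OF lo r])
  have hir: "(\<lambda>n. hi (r n)) \<longlonglongrightarrow> \<mu>" by (rule filterlim_compose[OF hi r])
  have bounds: "lo (r n) \<le> s n / real n \<and> s n / real n \<le> hi (r n)" if n: "n \<ge> 1" for n
  proof -
    define m where "m = r n"
    have m1: "m \<ge> 1" using n by (simp add: m_def r_def Suc_le_eq)
    have a: "m^2 \<le> n" by (simp add: m_def r_def)
    have b: "n < (Suc m)^2" by (simp add: m_def r_def Suc_floor_sqrt_power2_gt)
    have ra: "real m ^ 2 \<le> real n" using a by (metis of_nat_le_iff of_nat_power)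
    have rb: "real n \<le> real (Suc m) ^ 2" using b by (metis less_imp_le of_nat_le_iff of_nat_power)
    have m0: "real m ^ 2 > 0" using m1 by simp
    have "lo m = s (m^2) / real (Suc m) ^ 2" using m1 by (simp add: lo_def)
    also have "\<dots> \<le> s n / real (Suc m) ^ 2" by (intro divide_right_mono mo a) simp
    also have "\<dots> \<le> s n / real n" using n rb nn[of n] by (intro divide_left_mono) auto
    finally have 1: "lo m \<le> s n / real n" .
    have "s n / real n \<le> s n / real m ^ 2" using ra m0 nn[of n] n by (intro divide_left_mono) auto
    also have "\<dots> \<le> s ((Suc m)^2) / real m ^ 2" by (intro divide_right_mono mo) (use b in auto)
    also have "\<dots> = hi m" by (simp add: hi_def)
    finally show ?thesis using 1 by (simp add: m_def)
  qed
  show ?thesis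
  proof (rule tendsto_sandwich[OF _ _ lor hir])
    show "eventually (\<lambda>n. lo (r n) \<le> s n / real n) sequentially"
      using bounds by (auto simp: eventually_sequentially intro!: exI[of _ 1])
    show "eventually (\<lambda>n. s n / real n \<le> hi (r n)) sequentially"
      using bounds by (auto simp: eventually_sequentially intro!: exI[of _ 1])
  qed
qed

lemma (in prob_space) slln_var:
  fixes Y :: "nat \<Rightarrow> 'a \<Rightarrow> real" and \<mu> C :: real
  assumes meas[measurable]: "\<And>k. Y k \<in> borel_measurable M"
    and nonneg: "AE \<omega> in M. \<forall>k\<ge>1. 0 \<le> Y k \<omega>"
    and int: "\<And>n. integrable M (\<lambda>\<omega>. ((\<Sum>k\<in>{1..n}. Y k \<omega>) - real n * \<mu>)^2)"
    and var: "\<And>n. expectation (\<lambda>\<omega>. ((\<Sum>k\<in>{1..n}. Y k \<omega>) - real n * \<mu>)^2) \<le> C * real n"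
  shows "AE \<omega> in M. (\<lambda>n. (\<Sum>k\<in>{1..n}. Y k \<omega>) / real n) \<longlonglongrightarrow> \<mu>"
proof -
  define S where "S n \<omega> = (\<Sum>k\<in>{1..n}. Y k \<omega>)" for n \<omega>
  have Sm[measurable]: "S n \<in> borel_measurable M" for n unfolding S_def by measurable
  have ev: "AE \<omega> in M. eventually (\<lambda>m. \<bar>S ((Suc m)^2) \<omega> / real ((Suc m)^2) - \<mu>\<bar> < inverse (real (Suc r))) sequentially" for r
  proof -
    define e where "e = inverse (real (Suc r))"
    have e: "e > 0" by (simp add: e_def)
    define A where "A m = {\<omega> \<in> space M. e * real ((Suc m)^2) \<le> \<bar>S ((Suc m)^2) \<omega> - real ((Suc m)^2) * \<mu>\<bar>}" for m
    have A[measurable]: "A m \<in> sets M" for m unfolding A_def by measurable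
    have bound: "measure M (A m) \<le> C / e^2 * inverse (real (Suc m) ^ 2)" for m
    proof -
      define n where "n = (Suc m)^2"
      have n0: "real n > 0" by (simp add: n_def)
      have "measure M (A m) \<le> expectation (\<lambda>\<omega>. (S n \<omega> - real n * \<mu>)^2) / (e * real n)^2"
        unfolding A_def n_def[symmetric]
        by (rule second_moment_method) (use int[of n] e n0 in \<open>auto simp: S_def\<close>)
      also have "\<dots> \<le> C * real n / (e * real n)^2"
        by (rule divide_right_mono) (use var[of n] in \<open>auto simp: S_def\<close>)
      also have "\<dots> = C / e^2 * inverse (real n)"
        using n0 e by (simp add: field_simps power2_eq_square)
      also have "real n = real (Suc m) ^ 2" unfolding n_def by (rule of_nat_power)
      finally show ?thesis .
    qed
    have summ: "summable (\<lambda>m. measure M (A m))"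
    proof (rule summable_comparison_test[OF _ summable_mult[of "\<lambda>m. inverse (real (Suc m) ^ 2)" "C / e^2"]])
      show "\<exists>N. \<forall>n\<ge>N. norm (measure M (A n)) \<le> C / e^2 * inverse (real (Suc n) ^ 2)"
        using bound by auto
      show "summable (\<lambda>m. inverse (real (Suc m) ^ 2))"
        using inverse_power_summable[of 2, where 'a=real] by (subst summable_Suc_iff) simp
    qed
    have "AE \<omega> in M. eventually (\<lambda>m. \<omega> \<in> space M - A m) sequentially"
      by (rule borel_cantelli_AE1) (use summ in \<open>auto simp: emeasure_eq_measure\<close>)
    then show ?thesis
    proof (rule AE_mp[OF _ AE_I2], intro impI)
      fix \<omega> assume "\<omega> \<in> space M" and evA: "eventually (\<lambda>m. \<omega> \<in> space M - A m) sequentially"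
      from evA show "eventually (\<lambda>m. \<bar>S ((Suc m)^2) \<omega> / real ((Suc m)^2) - \<mu>\<bar> < inverse (real (Suc r))) sequentially"
      proof (rule eventually_mono)
        fix m assume "\<omega> \<in> space M - A m"
        then have "\<bar>S ((Suc m)^2) \<omega> - real ((Suc m)^2) * \<mu>\<bar> < e * real ((Suc m)^2)"
          using \<open>\<omega> \<in> space M\<close> by (auto simp: A_def)
        moreover have "\<bar>S ((Suc m)^2) \<omega> / real ((Suc m)^2) - \<mu>\<bar> = \<bar>S ((Suc m)^2) \<omega> - real ((Suc m)^2) * \<mu>\<bar> / real ((Suc m)^2)"
          by (simp add: field_simps del: of_nat_power of_nat_Suc)
        ultimately show "\<bar>S ((Suc m)^2) \<omega> / real ((Suc m)^2) - \<mu>\<bar> < inverse (real (Suc r))"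
          by (simp add: e_def[symmetric] divide_less_eq del: of_nat_power of_nat_Suc)
      qed
    qed
  qed
  have "AE \<omega> in M. \<forall>r. eventually (\<lambda>m. \<bar>S ((Suc m)^2) \<omega> / real ((Suc m)^2) - \<mu>\<bar> < inverse (real (Suc r))) sequentially"
    using ev by (subst AE_all_countable) auto
  with nonneg show ?thesis
  proof (eventually_elim)
    case (elim \<omega>)
    have sq: "(\<lambda>m. S ((Suc m)^2) \<omega> / real ((Suc m)^2)) \<longlonglongrightarrow> \<mu>"
      unfolding tendsto_iff dist_real_def
    proof (intro allI impI)
      fix x :: real assume "x > 0"
      then obtain r where "inverse (real (Suc r)) < x"
        using ex_inverse_of_nat_less[of x] by (metis Suc_pred)
      then show "eventually (\<lambda>m. \<bar>S ((Suc m)^2) \<omega> / real ((Suc m)^2) - \<mu>\<bar> < x) sequentially"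
        using elim(2)[rule_format, of r] by (auto elim: eventually_mono)
    qed
    have "(\<lambda>n. S n \<omega> / real n) \<longlonglongrightarrow> \<mu>"
    proof (rule interp_squares)
      show "S n \<omega> \<le> S (Suc n) \<omega>" for n using elim(1) by (simp add: S_def)
      show "S 0 \<omega> = 0" by (simp add: S_def)
      show "(\<lambda>m. S (m^2) \<omega> / real (m^2)) \<longlonglongrightarrow> \<mu>"
        using LIMSEQ_imp_Suc[OF sq] .
    qed
    then show ?case by (simp add: S_def)
  qed
qed



definition Qk :: "(nat \<Rightarrow> real) \<Rightarrow> (nat \<Rightarrow> real) \<Rightarrow> real \<Rightarrow> nat \<Rightarrow> real" where
  "Qk x y c k = (x (k - 1) + c) * (x k + y k) + (x k + y k)^2 / 2"

lemma upd_time_0[simp]: "upd_time x y 0 = 0"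
  by (simp add: upd_time_def)

lemma upd_time_Suc: "upd_time x y (Suc k) = upd_time x y k + (x (Suc k) + y (Suc k))"
  by (simp add: upd_time_def add.commute)

lemma upd_time_mono:
  assumes "\<And>k. k \<ge> 1 \<Longrightarrow> 0 \<le> x k + y k" and "a \<le> b"
  shows "upd_time x y a \<le> upd_time x y b"
  using assms(2)
proof (induction b)
  case 0 then show ?case by simp
next
  case (Suc b)
  show ?case
  proof (cases "a = Suc b")
    case False
    then have "upd_time x y a \<le> upd_time x y b" using Suc by simp
    also have "\<dots> \<le> upd_time x y (Suc b)" using assms(1)[of "Suc b"] by (simp add: upd_time_Suc)
    finally show ?thesis .
  qed simp
qed

lemma aoi_eq:
  assumes nn: "\<And>k. k \<ge> 1 \<Longrightarrow> 0 \<le> x k + y k"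
    and t: "upd_time x y j \<le> t" "t < upd_time x y (Suc j)"
  shows "aoi x y c t = x j + c + (t - upd_time x y j)"
proof -
  let ?U = "upd_time x y"
  have "(THE k. 1 \<le> k \<and> ?U (k - 1) \<le> t \<and> t < ?U k) = Suc j"
  proof (rule the_equality)
    show "1 \<le> Suc j \<and> ?U (Suc j - 1) \<le> t \<and> t < ?U (Suc j)" using t by simp
  next
    fix k assume k: "1 \<le> k \<and> ?U (k - 1) \<le> t \<and> t < ?U k"
    then obtain i where i: "k = Suc i" by (cases k) auto
    show "k = Suc j"
    proof (rule ccontr)
      assume "k \<noteq> Suc j"
      then consider "Suc i \<le> j" | "Suc j \<le> i" using i by linarith
      then show False
      proof cases
        case 1
        then have "?U (Suc i) \<le> ?U j" using upd_time_mono[of x y "Suc i" j] nn by blast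
        then show False using k t i by simp
      next
        case 2
        then have "?U (Suc j) \<le> ?U i" using upd_time_mono[of x y "Suc j" i] nn by blast
        then show False using k t i by simp
      qed
    qed
  qed
  then show ?thesis by (simp add: aoi_def)
qed

lemma linear_has_integral:
  fixes a u s :: real
  assumes "0 \<le> s"
  shows "((\<lambda>t. a + (t - u)) has_integral (a * s + s^2 / 2)) {u..u + s}"
proof -
  define F where "F t = (a - u) * t + t^2 / 2" for t :: real
  have "((\<lambda>t. a + (t - u)) has_integral (F (u + s) - F u)) {u..u + s}"
  proof (rule fundamental_theorem_of_calculus)
    show "u \<le> u + s" using assms by simp
    fix t :: real
    show "(F has_vector_derivative a + (t - u)) (at t within {u..u + s})"
      unfolding F_def has_real_derivative_iff_has_vector_derivative[symmetric]
      by (rule derivative_eq_intros refl | simp)+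
  qed
  moreover have "F (u + s) - F u = a * s + s^2 / 2"
    by (simp add: F_def power2_eq_square algebra_simps)
  ultimately show ?thesis by simp
qed

lemma aoi_piece:
  assumes nn: "\<And>k. k \<ge> 1 \<Longrightarrow> 0 \<le> x k + y k"
    and s: "0 \<le> s" "s \<le> x (Suc j) + y (Suc j)"
  shows "(aoi x y c has_integral ((x j + c) * s + s^2 / 2)) {upd_time x y j..upd_time x y j + s}"
proof (rule has_integral_spike_finite[OF _ _ linear_has_integral[OF s(1)]])
  show "finite {upd_time x y j + s}" by simp
  fix t assume "t \<in> {upd_time x y j..upd_time x y j + s} - {upd_time x y j + s}"
  then have "upd_time x y j \<le> t" "t < upd_time x y (Suc j)"
    using s by (auto simp: upd_time_Suc)
  then show "aoi x y c t = x j + c + (t - upd_time x y j)"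
    using aoi_eq[of x y j t c] nn by blast
qed

lemma aoi_full:
  assumes nn: "\<And>k. k \<ge> 1 \<Longrightarrow> 0 \<le> x k + y k"
  shows "(aoi x y c has_integral (\<Sum>k\<in>{1..n}. Qk x y c k)) {0..upd_time x y n}"
proof (induction n)
  case 0
  then show ?case using has_integral_refl(1)[of "aoi x y c" "0::real"] by simp
next
  case (Suc n)
  have p: "(aoi x y c has_integral Qk x y c (Suc n)) {upd_time x y n..upd_time x y (Suc n)}"
    using aoi_piece[of x y 0 n c] aoi_piece[of x y "x (Suc n) + y (Suc n)" n c] nn[of "Suc n"] nn by (simp add: Qk_def upd_time_Suc)
  have "(aoi x y c has_integral (\<Sum>k\<in>{1..n}. Qk x y c k) + Qk x y c (Suc n)) {0..upd_time x y (Suc n)}"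
    by (rule has_integral_combine[OF _ _ Suc p])
       (use upd_time_mono[of x y, OF nn, of 0 n] upd_time_mono[of x y, OF nn, of n "Suc n"] in auto)
  then show ?case by (simp add: add.commute)
qed

lemma aoi_partial:
  assumes nn: "\<And>k. k \<ge> 1 \<Longrightarrow> 0 \<le> x k + y k" and xn: "\<And>k. 0 \<le> x k" and c: "0 \<le> c"
    and t: "upd_time x y N \<le> t" "t < upd_time x y (Suc N)"
  shows "(\<Sum>k\<in>{1..N}. Qk x y c k) \<le> integral {0..t} (aoi x y c)
     \<and> integral {0..t} (aoi x y c) \<le> (\<Sum>k\<in>{1..Suc N}. Qk x y c k)"
proof -
  define s where "s = t - upd_time x y N"
  have s: "0 \<le> s" "s \<le> x (Suc N) + y (Suc N)" using t by (auto simp: s_def upd_time_Suc)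
  have p: "(aoi x y c has_integral ((x N + c) * s + s^2 / 2)) {upd_time x y N..t}"
    using aoi_piece[of x y s N c] nn s by (simp add: s_def)
  have "(aoi x y c has_integral (\<Sum>k\<in>{1..N}. Qk x y c k) + ((x N + c) * s + s^2 / 2)) {0..t}"
    by (rule has_integral_combine[OF _ _ aoi_full[of x y, OF nn] p])
       (use upd_time_mono[of x y, OF nn, of 0 N] t in auto)
  then have I: "integral {0..t} (aoi x y c) = (\<Sum>k\<in>{1..N}. Qk x y c k) + ((x N + c) * s + s^2 / 2)"
    by (rule integral_unique)
  have l: "0 \<le> (x N + c) * s + s^2 / 2" using xn[of N] c s by simp
  have "(x N + c) * s + s^2 / 2 \<le> (x N + c) * (x (Suc N) + y (Suc N)) + (x (Suc N) + y (Suc N))^2 / 2"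
    using xn[of N] c s by (intro add_mono mult_left_mono divide_right_mono power_mono) auto
  then have u: "(x N + c) * s + s^2 / 2 \<le> Qk x y c (Suc N)" by (simp add: Qk_def)
  show ?thesis using I l u by simp
qed

lemma ratio_aux:
  fixes s u a b :: real
  assumes "a \<noteq> 0" "b \<noteq> 0"
  shows "(s / a) * (a / b) / (u / b) = s / u"
proof (cases "u = 0")
  case False then show ?thesis using assms by (simp add: field_simps)
qed simp

lemma renewal_limit:
  fixes x y :: "nat \<Rightarrow> real" and c mT q :: real
  assumes nn: "\<And>k. k \<ge> 1 \<Longrightarrow> 0 \<le> x k + y k" and xn: "\<And>k. 0 \<le> x k" and c: "0 \<le> c"
    and LT: "(\<lambda>n. upd_time x y n / real n) \<longlonglongrightarrow> mT" and mT: "mT > 0"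
    and LQ: "(\<lambda>n. (\<Sum>k\<in>{1..n}. Qk x y c k) / real n) \<longlonglongrightarrow> q"
  shows "((\<lambda>\<tau>. (1 / \<tau>) * integral {0..\<tau>} (aoi x y c)) \<longlongrightarrow> q / mT) at_top"
proof -
  define U where "U = upd_time x y"
  define S where "S n = (\<Sum>k\<in>{1..n}. Qk x y c k)" for n
  have Umono: "a \<le> b \<Longrightarrow> U a \<le> U b" for a b unfolding U_def using upd_time_mono[of x y a b] nn by blast
  have Snn: "0 \<le> S n" for n unfolding S_def Qk_def using xn c nn by (intro sum_nonneg) auto
  have LT': "(\<lambda>n. U n / real n) \<longlonglongrightarrow> mT" using LT by (simp add: U_def)
  have LQ': "(\<lambda>n. S n / real n) \<longlonglongrightarrow> q" using LQ by (simp add: S_def)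
  have Uinf: "filterlim U at_top sequentially"
  proof -
    have fl: "filterlim (\<lambda>n. U n / real n * real n) at_top sequentially"
      by (rule filterlim_tendsto_pos_mult_at_top[OF LT' mT filterlim_real_sequentially])
    have ev: "eventually (\<lambda>n. U n / real n * real n = U n) sequentially"
      using eventually_gt_at_top[of "0::nat"] by eventually_elim simp
    show ?thesis using fl filterlim_cong[OF refl refl ev] by simp
  qed
  define L where "L = q / mT"
  have lo: "(\<lambda>N. S N / U (Suc N)) \<longlonglongrightarrow> L" (is "(\<lambda>N. ?f N) \<longlonglongrightarrow> _")
  proof -
    have "(\<lambda>N. (S N / real N) * (real N / real (Suc N)) / (U (Suc N) / real (Suc N))) \<longlonglongrightarrow> q * 1 / mT"
      by (intro tendsto_intros LQ' LIMSEQ_n_over_Suc_n LIMSEQ_Suc[OF LT']) (use mT in auto)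
    moreover have "eventually (\<lambda>N. (S N / real N) * (real N / real (Suc N)) / (U (Suc N) / real (Suc N)) = ?f N) sequentially"
      using eventually_gt_at_top[of "0::nat"]
    proof eventually_elim
      case (elim N) then show ?case by (intro ratio_aux) auto
    qed
    ultimately have "(\<lambda>N. ?f N) \<longlonglongrightarrow> q * 1 / mT" by (rule Lim_transform_eventually)
    then show ?thesis by (simp add: L_def)
  qed
  have hi: "(\<lambda>N. S (Suc N) / U N) \<longlonglongrightarrow> L" (is "(\<lambda>N. ?f N) \<longlonglongrightarrow> _")
  proof -
    have "(\<lambda>N. (S (Suc N) / real (Suc N)) * (real (Suc N) / real N) / (U N / real N)) \<longlonglongrightarrow> q * 1 / mT"
      by (intro tendsto_intros LIMSEQ_Suc[OF LQ'] LIMSEQ_Suc_n_over_n LT') (use mT in auto)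
    moreover have "eventually (\<lambda>N. (S (Suc N) / real (Suc N)) * (real (Suc N) / real N) / (U N / real N) = ?f N) sequentially"
      using eventually_gt_at_top[of "0::nat"]
    proof eventually_elim
      case (elim N) then show ?case by (intro ratio_aux) auto
    qed
    ultimately have "(\<lambda>N. ?f N) \<longlonglongrightarrow> q * 1 / mT" by (rule Lim_transform_eventually)
    then show ?thesis by (simp add: L_def)
  qed
  have Upos: "eventually (\<lambda>N. U N > 0) sequentially"
    using filterlim_at_top_dense[THEN iffD1, OF Uinf, rule_format, of 0] by simp
  show ?thesis
    unfolding tendsto_iff L_def[symmetric]
  proof (intro allI impI)
    fix e :: real assume e: "e > 0"
    have "eventually (\<lambda>N. dist (S N / U (Suc N)) L < e \<and> dist (S (Suc N) / U N) L < e \<and> U N > 0) sequentially"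
      using lo[unfolded tendsto_iff, rule_format, OF e] hi[unfolded tendsto_iff, rule_format, OF e] Upos
      by eventually_elim auto
    then obtain N0 where N0: "\<And>N. N \<ge> N0 \<Longrightarrow> dist (S N / U (Suc N)) L < e \<and> dist (S (Suc N) / U N) L < e \<and> U N > 0"
      by (auto simp: eventually_sequentially)
    show "eventually (\<lambda>\<tau>. dist (1 / \<tau> * integral {0..\<tau>} (aoi x y c)) L < e) at_top"
      unfolding eventually_at_top_linorder
    proof (intro exI[of _ "U N0"] allI impI)
      fix \<tau> assume \<tau>: "\<tau> \<ge> U N0"
      have UN0: "U N0 > 0" using N0[of N0] by simp
      have ex: "\<exists>n. \<tau> < U n"
        using filterlim_at_top_dense[THEN iffD1, OF Uinf, rule_format, of \<tau>] by (auto simp: eventually_sequentially)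
      define n where "n = (LEAST n. \<tau> < U n)"
      have n1: "\<tau> < U n" unfolding n_def using ex by (rule LeastI_ex)
      have n0: "n \<noteq> 0"
      proof
        assume "n = 0" then show False using n1 \<tau> UN0 by (simp add: U_def)
      qed
      define N where "N = n - 1"
      have SN: "n = Suc N" using n0 by (simp add: N_def)
      have t1: "U N \<le> \<tau>"
        using not_less_Least[of N "\<lambda>n. \<tau> < U n"] SN by (simp add: n_def[symmetric] not_less)
      have t2: "\<tau> < U (Suc N)" using n1 SN by simp
      have NN0: "N \<ge> N0"
      proof (rule ccontr)
        assume "\<not> N \<ge> N0"
        then have "U (Suc N) \<le> U N0" by (intro Umono) simp
        then show False using t2 \<tau> by simp
      qed
      have B: "S N \<le> integral {0..\<tau>} (aoi x y c) \<and> integral {0..\<tau>} (aoi x y c) \<le> S (Suc N)"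
        using aoi_partial[of x y c N \<tau>] nn xn c t1 t2 by (simp add: U_def S_def)
      have tpos: "\<tau> > 0" using UN0 \<tau> by simp
      have N0N: "dist (S N / U (Suc N)) L < e" "dist (S (Suc N) / U N) L < e" "U N > 0"
        using N0[OF NN0] by auto
      have "S N / U (Suc N) \<le> S N / \<tau>"
        using t2 tpos Snn[of N] by (intro divide_left_mono) auto
      also have "\<dots> \<le> integral {0..\<tau>} (aoi x y c) / \<tau>"
        using B tpos by (intro divide_right_mono) auto
      finally have l1: "S N / U (Suc N) \<le> integral {0..\<tau>} (aoi x y c) / \<tau>" .
      have "integral {0..\<tau>} (aoi x y c) / \<tau> \<le> S (Suc N) / \<tau>"
        using B tpos by (intro divide_right_mono) auto
      also have "\<dots> \<le> S (Suc N) / U N"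
        using t1 N0N(3) Snn[of "Suc N"] by (intro divide_left_mono) auto
      finally have l2: "integral {0..\<tau>} (aoi x y c) / \<tau> \<le> S (Suc N) / U N" .
      show "dist (1 / \<tau> * integral {0..\<tau>} (aoi x y c)) L < e"
        using l1 l2 N0N(1,2) by (simp add: dist_real_def abs_less_iff)
    qed
  qed
qed



lemma (in prob_space) indep_restrict_integral:
  fixes Z :: "'i \<Rightarrow> 'a \<Rightarrow> real" and f g :: "('i \<Rightarrow> real) \<Rightarrow> real"
  assumes ind: "indep_vars (\<lambda>_. borel) Z I" and AB: "A \<inter> B = {}" "A \<subseteq> I" "B \<subseteq> I"
    and f: "f \<in> borel_measurable (PiM A (\<lambda>_. borel))" and g: "g \<in> borel_measurable (PiM B (\<lambda>_. borel))"
    and fi: "integrable M (\<lambda>\<omega>. f (restrict (\<lambda>i. Z i \<omega>) A))"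
    and gi: "integrable M (\<lambda>\<omega>. g (restrict (\<lambda>i. Z i \<omega>) B))"
  shows "expectation (\<lambda>\<omega>. f (restrict (\<lambda>i. Z i \<omega>) A) * g (restrict (\<lambda>i. Z i \<omega>) B))
       = expectation (\<lambda>\<omega>. f (restrict (\<lambda>i. Z i \<omega>) A)) * expectation (\<lambda>\<omega>. g (restrict (\<lambda>i. Z i \<omega>) B))"
proof -
  have "indep_var borel (f \<circ> (\<lambda>\<omega>. restrict (\<lambda>i. Z i \<omega>) A)) borel (g \<circ> (\<lambda>\<omega>. restrict (\<lambda>i. Z i \<omega>) B))"
    by (rule indep_var_compose[OF indep_var_restrict[OF ind AB] f g])
  then have "indep_var borel (\<lambda>\<omega>. f (restrict (\<lambda>i. Z i \<omega>) A)) borel (\<lambda>\<omega>. g (restrict (\<lambda>i. Z i \<omega>) B))"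
    by (simp add: comp_def)
  then show ?thesis
    using indep_var_lebesgue_integral[of "\<lambda>\<omega>. f (restrict (\<lambda>i. Z i \<omega>) A)" "\<lambda>\<omega>. g (restrict (\<lambda>i. Z i \<omega>) B)"] fi gi
    by simp
qed

lemma (in prob_space) indep_pair_integral:
  fixes Z :: "'i \<Rightarrow> 'a \<Rightarrow> real"
  assumes ind: "indep_vars (\<lambda>_. borel) Z I" and ab: "a \<noteq> b" "a \<in> I" "b \<in> I"
    and fi: "integrable M (Z a)" and gi: "integrable M (Z b)"
  shows "expectation (\<lambda>\<omega>. Z a \<omega> * Z b \<omega>) = expectation (Z a) * expectation (Z b)"
  using indep_restrict_integral[OF ind, of "{a}" "{b}" "\<lambda>v. v a" "\<lambda>v. v b"] ab fi gi
  by simp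

lemma sq4_bound:
  fixes u v :: real
  shows "(u + v)^4 \<le> 8 * (u^4 + v^4)"
proof -
  have a: "(u + v)^2 \<le> 2 * (u^2 + v^2)" using sum_squares_ge_zero[of "u - v" 0]
    by (simp add: power2_eq_square algebra_simps)
  have b: "(u^2 + v^2)^2 \<le> 2 * (u^4 + v^4)"
  proof -
    have "0 \<le> (u^2 - v^2)^2" by simp
    then show ?thesis by (simp add: power2_eq_square algebra_simps power4_eq_xxxx)
  qed
  have "(u + v)^4 = ((u + v)^2)^2" by simp
  also have "\<dots> \<le> (2 * (u^2 + v^2))^2" using a by (intro power_mono) auto
  also have "\<dots> = 4 * (u^2 + v^2)^2" by (subst power_mult_distrib) simp
  also have "\<dots> \<le> 8 * (u^4 + v^4)" using b by simp
  finally show ?thesis .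
qed

lemma (in prob_space) var_bound:
  fixes Y :: "nat \<Rightarrow> 'a \<Rightarrow> real" and \<mu> B :: real
  assumes meas[measurable]: "\<And>k. Y k \<in> borel_measurable M"
    and sq: "\<And>k. k \<ge> 1 \<Longrightarrow> integrable M (\<lambda>\<omega>. Y k \<omega> ^ 2)"
    and mean: "\<And>k. k \<ge> 1 \<Longrightarrow> expectation (Y k) = \<mu>"
    and bnd: "\<And>k. k \<ge> 1 \<Longrightarrow> expectation (\<lambda>\<omega>. Y k \<omega> ^ 2) \<le> B"
    and uncor: "\<And>i j. 1 \<le> i \<Longrightarrow> i + 2 \<le> j \<Longrightarrow> expectation (\<lambda>\<omega>. Y i \<omega> * Y j \<omega>) = \<mu>^2"
  shows "integrable M (\<lambda>\<omega>. ((\<Sum>k\<in>{1..n}. Y k \<omega>) - real n * \<mu>)^2)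
    \<and> expectation (\<lambda>\<omega>. ((\<Sum>k\<in>{1..n}. Y k \<omega>) - real n * \<mu>)^2) \<le> (3 * B) * real n"
proof -
  have int1: "integrable M (Y k)" if "k \<ge> 1" for k
    by (rule square_integrable_imp_integrable[OF meas sq[OF that]])
  have intp: "integrable M (\<lambda>\<omega>. Y i \<omega> * Y j \<omega>)" if "i \<ge> 1" "j \<ge> 1" for i j
  proof (rule Bochner_Integration.integrable_bound[OF Bochner_Integration.integrable_add[OF sq[OF that(1)] sq[OF that(2)]]])
    show "(\<lambda>\<omega>. Y i \<omega> * Y j \<omega>) \<in> borel_measurable M" by measurable
    show "AE \<omega> in M. norm (Y i \<omega> * Y j \<omega>) \<le> norm (Y i \<omega> ^ 2 + Y j \<omega> ^ 2)"
    proof (rule AE_I2)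
      fix \<omega>
      have "\<bar>Y i \<omega> * Y j \<omega>\<bar> \<le> Y i \<omega> ^ 2 + Y j \<omega> ^ 2"
        using sum_squares_ge_zero[of "\<bar>Y i \<omega>\<bar> - \<bar>Y j \<omega>\<bar>" 0]
        by (simp add: abs_mult power2_eq_square algebra_simps)
           (smt (verit, best) abs_mult_self_eq mult_nonneg_nonneg abs_ge_zero)
      then show "norm (Y i \<omega> * Y j \<omega>) \<le> norm (Y i \<omega> ^ 2 + Y j \<omega> ^ 2)" by simp
    qed
  qed
  define C where "C i j = (\<lambda>\<omega>. (Y i \<omega> - \<mu>) * (Y j \<omega> - \<mu>))" for i j
  have Ceq: "C i j = (\<lambda>\<omega>. Y i \<omega> * Y j \<omega> - \<mu> * Y i \<omega> - \<mu> * Y j \<omega> + \<mu>^2)" for i j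
    by (auto simp: C_def fun_eq_iff algebra_simps power2_eq_square)
  have Cint: "integrable M (C i j)" if "i \<ge> 1" "j \<ge> 1" for i j
    unfolding Ceq using intp[OF that] int1[OF that(1)] int1[OF that(2)] by auto
  have Cexp: "expectation (C i j) = expectation (\<lambda>\<omega>. Y i \<omega> * Y j \<omega>) - \<mu>^2" if "i \<ge> 1" "j \<ge> 1" for i j
    unfolding Ceq using intp[OF that] int1[OF that(1)] int1[OF that(2)] mean[OF that(1)] mean[OF that(2)]
    by (simp add: prob_space power2_eq_square)
  have Cbnd: "expectation (C i j) \<le> (if i \<le> j + 1 \<and> j \<le> i + 1 then B else 0)" if "i \<ge> 1" "j \<ge> 1" for i j
  proof (cases "i \<le> j + 1 \<and> j \<le> i + 1")
    case True
    have "expectation (\<lambda>\<omega>. Y i \<omega> * Y j \<omega>) \<le> expectation (\<lambda>\<omega>. (Y i \<omega> ^ 2 + Y j \<omega> ^ 2) / 2)"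
    proof (rule integral_mono)
      show "integrable M (\<lambda>\<omega>. Y i \<omega> * Y j \<omega>)" by (rule intp[OF that])
      show "integrable M (\<lambda>\<omega>. (Y i \<omega> ^ 2 + Y j \<omega> ^ 2) / 2)" using sq[OF that(1)] sq[OF that(2)] by auto
      fix \<omega> show "Y i \<omega> * Y j \<omega> \<le> (Y i \<omega> ^ 2 + Y j \<omega> ^ 2) / 2"
        using sum_squares_ge_zero[of "Y i \<omega> - Y j \<omega>" 0] by (simp add: power2_eq_square algebra_simps)
    qed
    also have "\<dots> = (expectation (\<lambda>\<omega>. Y i \<omega> ^ 2) + expectation (\<lambda>\<omega>. Y j \<omega> ^ 2)) / 2"
      using sq[OF that(1)] sq[OF that(2)] by simp
    also have "\<dots> \<le> B" using bnd[OF that(1)] bnd[OF that(2)] by simp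
    finally have "expectation (\<lambda>\<omega>. Y i \<omega> * Y j \<omega>) \<le> B" .
    moreover have "0 \<le> \<mu>^2" by simp
    ultimately have "expectation (C i j) \<le> B" using Cexp[OF that] by linarith
    then show ?thesis using True by simp
  next
    case False
    then consider "i + 2 \<le> j" | "j + 2 \<le> i" by linarith
    then have "expectation (\<lambda>\<omega>. Y i \<omega> * Y j \<omega>) = \<mu>^2"
    proof cases
      case 1 then show ?thesis using uncor[OF that(1)] by simp
    next
      case 2 then show ?thesis using uncor[OF that(2) 2] by (simp add: mult.commute)
    qed
    then show ?thesis using False Cexp[OF that] by auto
  qed
  have sumeq: "((\<Sum>k\<in>{1..n}. Y k \<omega>) - real n * \<mu>)^2 = (\<Sum>i\<in>{1..n}. \<Sum>j\<in>{1..n}. C i j \<omega>)" for \<omega>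
  proof -
    have "(\<Sum>k\<in>{1..n}. Y k \<omega>) - real n * \<mu> = (\<Sum>k\<in>{1..n}. Y k \<omega> - \<mu>)"
      by (simp add: sum_subtractf)
    then show ?thesis by (simp add: power2_eq_square sum_product C_def)
  qed
  have I: "integrable M (\<lambda>\<omega>. \<Sum>i\<in>{1..n}. \<Sum>j\<in>{1..n}. C i j \<omega>)"
    using Cint by (intro Bochner_Integration.integrable_sum) auto
  have E: "expectation (\<lambda>\<omega>. \<Sum>i\<in>{1..n}. \<Sum>j\<in>{1..n}. C i j \<omega>) = (\<Sum>i\<in>{1..n}. \<Sum>j\<in>{1..n}. expectation (C i j))"
  proof -
    have "expectation (\<lambda>\<omega>. \<Sum>i\<in>{1..n}. \<Sum>j\<in>{1..n}. C i j \<omega>) = (\<Sum>i\<in>{1..n}. expectation (\<lambda>\<omega>. \<Sum>j\<in>{1..n}. C i j \<omega>))"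
      by (rule Bochner_Integration.integral_sum) (use Cint in \<open>auto intro!: Bochner_Integration.integrable_sum\<close>)
    also have "\<dots> = (\<Sum>i\<in>{1..n}. \<Sum>j\<in>{1..n}. expectation (C i j))"
      by (intro sum.cong refl Bochner_Integration.integral_sum) (use Cint in auto)
    finally show ?thesis .
  qed
  have B0: "0 \<le> B"
  proof -
    have "0 \<le> expectation (\<lambda>\<omega>. Y 1 \<omega> ^ 2)" by (rule integral_nonneg_AE) simp
    from order.trans[OF this bnd[of 1]] show ?thesis by simp
  qed
  have row: "(\<Sum>j\<in>{1..n}. expectation (C i j)) \<le> 3 * B" if "i \<in> {1..n}" for i
  proof -
    have "(\<Sum>j\<in>{1..n}. expectation (C i j)) \<le> (\<Sum>j\<in>{1..n}. (if i \<le> j + 1 \<and> j \<le> i + 1 then B else 0))"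
      using that by (intro sum_mono Cbnd) auto
    also have "\<dots> = B * real (card {j\<in>{1..n}. i \<le> j + 1 \<and> j \<le> i + 1})"
      by (simp add: sum.If_cases) (rule disjI2, rule arg_cong[where f=card], auto)
    also have "\<dots> \<le> B * 3"
    proof (intro mult_left_mono B0)
      have "card {j\<in>{1..n}. i \<le> j + 1 \<and> j \<le> i + 1} \<le> card {i - 1, i, i + 1}"
        by (intro card_mono) auto
      also have "\<dots> \<le> 3" by (simp add: card_insert_if)
      finally show "real (card {j\<in>{1..n}. i \<le> j + 1 \<and> j \<le> i + 1}) \<le> 3" by simp
    qed
    finally show ?thesis by simp
  qed
  have "(\<Sum>i\<in>{1..n}. \<Sum>j\<in>{1..n}. expectation (C i j)) \<le> (\<Sum>i\<in>{1..n}. 3 * B)"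
    by (rule sum_mono) (rule row)
  also have "\<dots> = 3 * B * real n" by simp
  finally have fin: "(\<Sum>i\<in>{1..n}. \<Sum>j\<in>{1..n}. expectation (C i j)) \<le> 3 * B * real n" .
  have feq: "(\<lambda>\<omega>. ((\<Sum>k\<in>{1..n}. Y k \<omega>) - real n * \<mu>)^2) = (\<lambda>\<omega>. \<Sum>i\<in>{1..n}. \<Sum>j\<in>{1..n}. C i j \<omega>)"
    by (rule ext) (rule sumeq)
  show ?thesis unfolding feq using I E fin by simp
qed



lemma two_mult_le_sq: fixes u w :: real shows "2 * (u * w) \<le> u^2 + w^2"
proof -
  have "0 \<le> (u - w)^2" by simp
  then show ?thesis by (simp add: power2_eq_square algebra_simps)
qed

lemma half_le_aux: fixes p a b :: real assumes "p \<le> (a + b) / 2" "0 \<le> a" "0 \<le> b" shows "p \<le> a + b"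
  using assms by simp

lemma tri_aux: fixes z y a b :: real assumes "z \<le> y + b / 2" "y \<le> (a + b) / 2" "0 \<le> a" "0 \<le> b" shows "z \<le> a + b"
  using assms by simp

lemma abs_mult_le_sq: fixes u w :: real shows "\<bar>u * w\<bar> \<le> (u^2 + w^2) / 2"
  using two_mult_le_sq[of "\<bar>u\<bar>" "\<bar>w\<bar>"] by (simp add: abs_mult)

lemma (in prob_space) integrable_prod_sq:
  fixes f g :: "'a \<Rightarrow> real"
  assumes [measurable]: "f \<in> borel_measurable M" "g \<in> borel_measurable M"
    and "integrable M (\<lambda>\<omega>. f \<omega> ^ 2)" "integrable M (\<lambda>\<omega>. g \<omega> ^ 2)"
  shows "integrable M (\<lambda>\<omega>. f \<omega> * g \<omega>)"
proof (rule Bochner_Integration.integrable_bound[OF Bochner_Integration.integrable_add[OF assms(3,4)]])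
  show "(\<lambda>\<omega>. f \<omega> * g \<omega>) \<in> borel_measurable M" by measurable
  show "AE \<omega> in M. norm (f \<omega> * g \<omega>) \<le> norm (f \<omega> ^ 2 + g \<omega> ^ 2)"
  proof (rule AE_I2)
    fix \<omega>
    have "\<bar>f \<omega> * g \<omega>\<bar> \<le> f \<omega> ^ 2 + g \<omega> ^ 2"
      by (rule half_le_aux[OF abs_mult_le_sq]) simp_all
    then show "norm (f \<omega> * g \<omega>) \<le> norm (f \<omega> ^ 2 + g \<omega> ^ 2)" by simp
  qed
qed

lemma Gamma_ratio:
  fixes a :: real assumes a: "a > 0"
  shows "Gamma (a + 1) / Gamma a = a" "Gamma (a + 2) / Gamma a = a * (a + 1)"
proof -
  have g1: "Gamma (a + 1) = a * Gamma a" using a by (intro Gamma_plus1) auto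
  have "Gamma (a + 2) = Gamma ((a + 1) + 1)" by (simp add: add.assoc)
  also have "\<dots> = (a + 1) * Gamma (a + 1)" using a by (intro Gamma_plus1) auto
  finally have g2: "Gamma (a + 2) = (a + 1) * (a * Gamma a)" using g1 by simp
  have "Gamma a > 0" using a by simp
  then show "Gamma (a + 1) / Gamma a = a" "Gamma (a + 2) / Gamma a = a * (a + 1)"
    using g1 g2 by (simp_all add: field_simps)
qed

lemma Q_sq_bound:
  fixes l c x t :: real
  shows "((l + c) * (x + t) + (x + t)^2 / 2)^2 \<le> 16 * (l^4 + c^4 + x^4 + t^4)"
proof -
  define A where "A = (l + c)^2"
  define B where "B = (x + t)^2"
  have A0: "0 \<le> A" and B0: "0 \<le> B" by (simp_all add: A_def B_def)
  have p: "\<bar>(l + c) * (x + t)\<bar> \<le> (A + B) / 2"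
    unfolding A_def B_def by (rule abs_mult_le_sq)
  have "\<bar>(l + c) * (x + t) + (x + t)^2 / 2\<bar> \<le> \<bar>(l + c) * (x + t)\<bar> + \<bar>(x + t)^2 / 2\<bar>"
    by (rule abs_triangle_ineq)
  also have "\<bar>(x + t)^2 / 2\<bar> = B / 2" by (simp add: B_def)
  finally have q: "\<bar>(l + c) * (x + t) + (x + t)^2 / 2\<bar> \<le> A + B"
    by (rule tri_aux[OF _ p A0 B0])
  have "((l + c) * (x + t) + (x + t)^2 / 2)^2 = \<bar>(l + c) * (x + t) + (x + t)^2 / 2\<bar>^2" by simp
  also have "\<dots> \<le> (A + B)^2" by (rule power_mono[OF q]) simp
  finally have "((l + c) * (x + t) + (x + t)^2 / 2)^2 \<le> (A + B)^2" .
  also have "\<dots> \<le> 2 * (A^2 + B^2)"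
    using two_mult_le_sq[of A B] by (simp add: power2_eq_square algebra_simps)
  also have "A^2 = (l + c)^4" by (simp add: A_def flip: power_mult)
  also have "B^2 = (x + t)^4" by (simp add: B_def flip: power_mult)
  also have "2 * ((l + c)^4 + (x + t)^4) \<le> 2 * (8 * (l^4 + c^4) + 8 * (x^4 + t^4))"
    using sq4_bound[of l c] sq4_bound[of x t] by simp
  finally show ?thesis by simp
qed



theorem lemma1:
  fixes M :: "'w measure" and X Tint :: "nat \<Rightarrow> 'w \<Rightarrow> real"
    and \<alpha> \<beta> \<rho> Ttx :: real
  assumes "prob_space M"
    and "\<alpha> > 0" "\<beta> > 0" "\<rho> > 0" "Ttx \<ge> 0"
    and "prob_space.indep_vars M (\<lambda>_. borel)
           (\<lambda>i. case i of Inl k \<Rightarrow> X k | Inr k \<Rightarrow> Tint k) (range Inl \<union> Inr ` {1..})"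
    and "\<And>k. distributed M lborel (X k) (\<lambda>x. ennreal (gamma_density \<alpha> \<beta> x))"
    and "\<And>k. k \<ge> 1 \<Longrightarrow> distributed M lborel (Tint k) (\<lambda>x. ennreal (exponential_density \<rho> x))"
  shows "(AE \<omega> in M.
           ((\<lambda>\<tau>. (1 / \<tau>) * integral {0..\<tau>} (aoi (\<lambda>k. X k \<omega>) (\<lambda>k. Tint k \<omega>) Ttx))
              \<longlongrightarrow> avg_aoi \<alpha> \<beta> \<rho> Ttx) at_top)
       \<and> (\<forall>k\<ge>1. avg_aoi \<alpha> \<beta> \<rho> Ttx =
            prob_space.expectation M
              (\<lambda>\<omega>. (peak_aoi (\<lambda>j. X j \<omega>) (\<lambda>j. Tint j \<omega>) Ttx k ^ 2
                     - (X (k - 1) \<omega> + Ttx) ^ 2) / 2)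
            / prob_space.expectation M (\<lambda>\<omega>. X k \<omega> + Tint k \<omega>))"
proof -
  interpret P: prob_space M by fact
  note a = assms(2) and b = assms(3) and r = assms(4) and c = assms(5)
  note DX = assms(7) and DT = assms(8)
  define c0 where "c0 = Ttx"
  define Z where "Z = (\<lambda>i. case i of Inl k \<Rightarrow> X k | Inr k \<Rightarrow> Tint k)"
  define I :: "(nat + nat) set" where "I = range Inl \<union> Inr ` {1..}"
  have ind: "P.indep_vars (\<lambda>_. borel) Z I" using assms(6) by (simp add: Z_def I_def)
  have ZX[simp]: "Z (Inl k) = X k" and ZT[simp]: "Z (Inr k) = Tint k" for k by (simp_all add: Z_def)
  have IX[simp]: "Inl k \<in> I" for k by (simp add: I_def)
  have IT[simp]: "Inr k \<in> I \<longleftrightarrow> k \<ge> 1" for k by (auto simp: I_def)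
  have XM[measurable]: "X k \<in> borel_measurable M" for k using distributed_measurable[OF DX[of k]] by simp
  have TM[measurable]: "Tint k \<in> borel_measurable M" if "k \<ge> 1" for k using distributed_measurable[OF DT[OF that]] by simp
  define a1 where "a1 = \<alpha> / \<beta>"
  define a2 where "a2 = \<alpha> * (\<alpha> + 1) / \<beta>^2"
  define b1 where "b1 = 1 / \<rho>"
  define b2 where "b2 = 2 / \<rho>^2"
  have hX: "has_bochner_integral M (\<lambda>\<omega>. X k \<omega> ^ i) (Gamma (\<alpha> + i) / (Gamma \<alpha> * \<beta> ^ i))" for k i
    by (rule P.gamma_moment[OF a b DX])
  have hT: "has_bochner_integral M (\<lambda>\<omega>. Tint k \<omega> ^ i) (fact i / \<rho> ^ i)" if "k \<ge> 1" for k i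
    using P.has_bochner_integral_erlang_ith_moment[OF r DT[OF that], of i] by simp
  have iX: "integrable M (\<lambda>\<omega>. X k \<omega> ^ i)" for k i using hX by (auto simp: has_bochner_integral_iff)
  have iT: "integrable M (\<lambda>\<omega>. Tint k \<omega> ^ i)" if "k \<ge> 1" for k i using hT[OF that] by (auto simp: has_bochner_integral_iff)
  have iX1: "integrable M (X k)" for k using iX[of k 1] by simp
  have iT1: "integrable M (Tint k)" if "k \<ge> 1" for k using iT[OF that, of 1] by simp
  have eX1: "P.expectation (X k) = a1" for k
    using has_bochner_integral_integral_eq[OF hX[of k 1]] Gamma_ratio(1)[OF a] b
    by (simp add: a1_def field_simps)
  have eX2: "P.expectation (\<lambda>\<omega>. X k \<omega> ^ 2) = a2" for k
    using has_bochner_integral_integral_eq[OF hX[of k 2]] Gamma_ratio(2)[OF a] b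
    by (simp add: a2_def field_simps)
  have eT1: "P.expectation (Tint k) = b1" if "k \<ge> 1" for k
    using has_bochner_integral_integral_eq[OF hT[OF that, of 1]] by (simp add: b1_def)
  have eT2: "P.expectation (\<lambda>\<omega>. Tint k \<omega> ^ 2) = b2" if "k \<ge> 1" for k
    using has_bochner_integral_integral_eq[OF hT[OF that, of 2]] by (simp add: b2_def)
  have nnX: "AE \<omega> in M. \<forall>k. 0 \<le> X k \<omega>"
    by (subst AE_all_countable) (auto intro: P.gamma_nonneg_AE[OF b DX])
  have nnT: "AE \<omega> in M. \<forall>k\<ge>1. 0 \<le> Tint k \<omega>"
  proof -
    have "AE \<omega> in M. \<forall>k. k \<ge> 1 \<longrightarrow> 0 \<le> Tint k \<omega>"
    proof (subst AE_all_countable, intro allI)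
      fix k :: nat show "AE \<omega> in M. k \<ge> 1 \<longrightarrow> 0 \<le> Tint k \<omega>"
        by (cases "k \<ge> 1") (auto intro: P.exp_nonneg_AE[OF DT])
    qed
    then show ?thesis by simp
  qed
  have eXT: "P.expectation (\<lambda>\<omega>. X k \<omega> * Tint k \<omega>) = a1 * b1" if "k \<ge> 1" for k
    using P.indep_pair_integral[OF ind, of "Inl k" "Inr k"] that iX1[of k] iT1[OF that] eX1[of k] eT1[OF that]
    by simp
  have iXT: "integrable M (\<lambda>\<omega>. X j \<omega> * Tint k \<omega>)" if "k \<ge> 1" for j k
    by (rule P.integrable_prod_sq) (use iX[of j 2] iT[OF that, of 2] that in auto)
  define T where "T k \<omega> = (if k = 0 then 0 else X k \<omega> + Tint k \<omega>)" for k \<omega>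
  have TMe[measurable]: "T k \<in> borel_measurable M" for k
  proof (cases "k = 0")
    case True then have "T k = (\<lambda>_. 0)" by (simp add: T_def fun_eq_iff)
    then show ?thesis by simp
  next
    case False
    then have "T k = (\<lambda>\<omega>. X k \<omega> + Tint k \<omega>)" by (auto simp: T_def)
    moreover have "Tint k \<in> borel_measurable M" using False by (intro TM) simp
    ultimately show ?thesis by simp
  qed
  have Tk: "T k \<omega> = X k \<omega> + Tint k \<omega>" if "k \<ge> 1" for k \<omega> using that by (simp add: T_def)
  define mT where "mT = a1 + b1"
  define m2 where "m2 = a2 + 2 * (a1 * b1) + b2"
  have T2eq: "(\<lambda>\<omega>. T k \<omega> ^ 2) = (\<lambda>\<omega>. X k \<omega> ^ 2 + 2 * (X k \<omega> * Tint k \<omega>) + Tint k \<omega> ^ 2)" if "k \<ge> 1" for k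
    using that by (auto simp: Tk power2_eq_square algebra_simps)
  have iT2: "integrable M (\<lambda>\<omega>. T k \<omega> ^ 2)" if "k \<ge> 1" for k
    unfolding T2eq[OF that] using iX[of k 2] iT[OF that, of 2] iXT[OF that, of k] by auto
  have eTT2: "P.expectation (\<lambda>\<omega>. T k \<omega> ^ 2) = m2" if "k \<ge> 1" for k
    unfolding T2eq[OF that] using iX[of k 2] iT[OF that, of 2] iXT[OF that, of k] eX2[of k] eT2[OF that] eXT[OF that]
    by (simp add: m2_def)
  have Teq: "T k = (\<lambda>\<omega>. X k \<omega> + Tint k \<omega>)" if "k \<ge> 1" for k
    using that by (auto simp: fun_eq_iff Tk)
  have iTT: "integrable M (T k)" if "k \<ge> 1" for k
    unfolding Teq[OF that] using iX1[of k] iT1[OF that] by simp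
  have eTT: "P.expectation (T k) = mT" if "k \<ge> 1" for k
    unfolding Teq[OF that] using iX1[of k] iT1[OF that] eX1[of k] eT1[OF that] by (simp add: mT_def)
  have uT: "P.expectation (\<lambda>\<omega>. T i \<omega> * T j \<omega>) = mT^2" if "1 \<le> i" "i + 2 \<le> j" for i j
  proof -
    have j: "j \<ge> 1" using that by simp
    let ?f = "\<lambda>v::(nat + nat) \<Rightarrow> real. v (Inl i) + v (Inr i)"
    let ?g = "\<lambda>v::(nat + nat) \<Rightarrow> real. v (Inl j) + v (Inr j)"
    have r1: "?f (restrict (\<lambda>l. Z l \<omega>) {Inl i, Inr i}) = T i \<omega>" for \<omega> using that by (simp add: Tk)
    have r2: "?g (restrict (\<lambda>l. Z l \<omega>) {Inl j, Inr j}) = T j \<omega>" for \<omega> using j by (simp add: Tk)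
    have "P.expectation (\<lambda>\<omega>. ?f (restrict (\<lambda>l. Z l \<omega>) {Inl i, Inr i}) * ?g (restrict (\<lambda>l. Z l \<omega>) {Inl j, Inr j}))
       = P.expectation (\<lambda>\<omega>. ?f (restrict (\<lambda>l. Z l \<omega>) {Inl i, Inr i})) * P.expectation (\<lambda>\<omega>. ?g (restrict (\<lambda>l. Z l \<omega>) {Inl j, Inr j}))"
    proof (rule P.indep_restrict_integral[OF ind])
      show "integrable M (\<lambda>\<omega>. ?f (restrict (\<lambda>l. Z l \<omega>) {Inl i, Inr i}))"
        unfolding r1 Teq[OF that(1)] using iX1[of i] iT1[OF that(1)] by simp
      show "integrable M (\<lambda>\<omega>. ?g (restrict (\<lambda>l. Z l \<omega>) {Inl j, Inr j}))"
        unfolding r2 Teq[OF j] using iX1[of j] iT1[OF j] by simp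
    qed (use that j in auto)
    then show ?thesis using eTT[OF that(1)] eTT[OF j] by (simp add: r1 r2 Teq[OF that(1)] Teq[OF j] power2_eq_square)
  qed
  define Q where "Q k \<omega> = (if k = 0 then 0 else Qk (\<lambda>j. X j \<omega>) (\<lambda>j. Tint j \<omega>) Ttx k)" for k \<omega>
  have QMe[measurable]: "Q k \<in> borel_measurable M" for k
  proof (cases "k = 0")
    case True then have "Q k = (\<lambda>_. 0)" by (simp add: Q_def fun_eq_iff)
    then show ?thesis by simp
  next
    case False
    then have "Q k = (\<lambda>\<omega>. (X (k - 1) \<omega> + Ttx) * (X k \<omega> + Tint k \<omega>) + (X k \<omega> + Tint k \<omega>)^2 / 2)"
      by (auto simp: Q_def Qk_def)
    moreover have "Tint k \<in> borel_measurable M" using False by (intro TM) simp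
    ultimately show ?thesis by simp
  qed
  have Qk_eq: "Q k \<omega> = (X (k - 1) \<omega> + Ttx) * T k \<omega> + T k \<omega> ^ 2 / 2" if "k \<ge> 1" for k \<omega>
    using that by (simp add: Q_def Qk_def Tk)
  define q where "q = (a1 + Ttx) * mT + m2 / 2"
  have iL2: "integrable M (\<lambda>\<omega>. (X k \<omega> + Ttx) ^ 2)" for k
  proof -
    have "(\<lambda>\<omega>. (X k \<omega> + Ttx) ^ 2) = (\<lambda>\<omega>. X k \<omega> ^ 2 + 2 * Ttx * X k \<omega> + Ttx ^ 2)"
      by (auto simp: power2_eq_square algebra_simps)
    then show ?thesis using iX[of k 2] iX1[of k] by simp
  qed
  have iLT: "integrable M (\<lambda>\<omega>. (X (k - 1) \<omega> + Ttx) * T k \<omega>)" if "k \<ge> 1" for k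
    by (rule P.integrable_prod_sq) (use iL2 iT2[OF that] in auto)
  have eLT: "P.expectation (\<lambda>\<omega>. (X (k - 1) \<omega> + Ttx) * T k \<omega>) = (a1 + Ttx) * mT" if "k \<ge> 1" for k
  proof -
    let ?f = "\<lambda>v::(nat + nat) \<Rightarrow> real. v (Inl (k - 1)) + Ttx"
    let ?g = "\<lambda>v::(nat + nat) \<Rightarrow> real. v (Inl k) + v (Inr k)"
    have r1: "?f (restrict (\<lambda>l. Z l \<omega>) {Inl (k - 1)}) = X (k - 1) \<omega> + Ttx" for \<omega> by simp
    have r2: "?g (restrict (\<lambda>l. Z l \<omega>) {Inl k, Inr k}) = T k \<omega>" for \<omega> using that by (simp add: Tk)
    have "P.expectation (\<lambda>\<omega>. ?f (restrict (\<lambda>l. Z l \<omega>) {Inl (k - 1)}) * ?g (restrict (\<lambda>l. Z l \<omega>) {Inl k, Inr k}))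
       = P.expectation (\<lambda>\<omega>. ?f (restrict (\<lambda>l. Z l \<omega>) {Inl (k - 1)})) * P.expectation (\<lambda>\<omega>. ?g (restrict (\<lambda>l. Z l \<omega>) {Inl k, Inr k}))"
    proof (rule P.indep_restrict_integral[OF ind])
      show "integrable M (\<lambda>\<omega>. ?g (restrict (\<lambda>l. Z l \<omega>) {Inl k, Inr k}))"
        unfolding r2 Teq[OF that] using iX1[of k] iT1[OF that] by simp
      show "integrable M (\<lambda>\<omega>. ?f (restrict (\<lambda>l. Z l \<omega>) {Inl (k - 1)}))"
        unfolding r1 using iX1[of "k - 1"] by simp
    qed (use that in auto)
    then show ?thesis using eTT[OF that] iX1[of "k - 1"] eX1[of "k - 1"] by (simp add: r1 r2 Teq[OF that] P.prob_space)
  qed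
  have iQ: "integrable M (Q k)" if "k \<ge> 1" for k
  proof -
    have "Q k = (\<lambda>\<omega>. (X (k - 1) \<omega> + Ttx) * T k \<omega> + T k \<omega> ^ 2 / 2)" using that by (auto simp: Qk_eq)
    then show ?thesis using iLT[OF that] iT2[OF that] by simp
  qed
  have eQ: "P.expectation (Q k) = q" if "k \<ge> 1" for k
  proof -
    have "Q k = (\<lambda>\<omega>. (X (k - 1) \<omega> + Ttx) * T k \<omega> + T k \<omega> ^ 2 / 2)" using that by (auto simp: Qk_eq)
    then show ?thesis using iLT[OF that] iT2[OF that] eLT[OF that] eTT2[OF that] by (simp add: q_def)
  qed
  define BQ where "BQ = 16 * (2 * (Gamma (\<alpha> + 4) / (Gamma \<alpha> * \<beta> ^ 4)) + Ttx^4 + fact 4 / \<rho> ^ 4)"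
  have Q2b: "Q k \<omega> ^ 2 \<le> 16 * (X (k - 1) \<omega> ^ 4 + Ttx ^ 4 + X k \<omega> ^ 4 + Tint k \<omega> ^ 4)" if "k \<ge> 1" for k \<omega>
    using Q_sq_bound[of "X (k - 1) \<omega>" Ttx "X k \<omega>" "Tint k \<omega>"] that by (simp add: Q_def Qk_def)
  have ibQ: "integrable M (\<lambda>\<omega>. 16 * (X (k - 1) \<omega> ^ 4 + Ttx ^ 4 + X k \<omega> ^ 4 + Tint k \<omega> ^ 4))" if "k \<ge> 1" for k
    using iX[of "k - 1" 4] iX[of k 4] iT[OF that, of 4] by simp
  have iQ2: "integrable M (\<lambda>\<omega>. Q k \<omega> ^ 2)" if "k \<ge> 1" for k
  proof (rule Bochner_Integration.integrable_bound[OF ibQ[OF that]])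
    show "(\<lambda>\<omega>. Q k \<omega> ^ 2) \<in> borel_measurable M" by measurable
    show "AE \<omega> in M. norm (Q k \<omega> ^ 2) \<le> norm (16 * (X (k - 1) \<omega> ^ 4 + Ttx ^ 4 + X k \<omega> ^ 4 + Tint k \<omega> ^ 4))"
      using nnX nnT
    proof eventually_elim
      case (elim \<omega>)
      have "0 \<le> X (k - 1) \<omega> ^ 4 + Ttx ^ 4 + X k \<omega> ^ 4 + Tint k \<omega> ^ 4" by simp
      then show ?case using Q2b[OF that, of \<omega>] by simp
    qed
  qed
  have eQ2: "P.expectation (\<lambda>\<omega>. Q k \<omega> ^ 2) \<le> BQ" if "k \<ge> 1" for k
  proof -
    have "P.expectation (\<lambda>\<omega>. Q k \<omega> ^ 2) \<le> P.expectation (\<lambda>\<omega>. 16 * (X (k - 1) \<omega> ^ 4 + Ttx ^ 4 + X k \<omega> ^ 4 + Tint k \<omega> ^ 4))"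
      by (rule integral_mono[OF iQ2[OF that] ibQ[OF that] Q2b[OF that]])
    also have "\<dots> = BQ"
      using iX[of "k - 1" 4] iX[of k 4] iT[OF that, of 4]
        has_bochner_integral_integral_eq[OF hX[of "k - 1" 4]] has_bochner_integral_integral_eq[OF hX[of k 4]]
        has_bochner_integral_integral_eq[OF hT[OF that, of 4]]
      by (simp add: BQ_def P.prob_space)
    finally show ?thesis .
  qed
  have uQ: "P.expectation (\<lambda>\<omega>. Q i \<omega> * Q j \<omega>) = q^2" if "1 \<le> i" "i + 2 \<le> j" for i j
  proof -
    have j: "j \<ge> 1" using that by simp
    define fQ where "fQ k v = (v (Inl (k - 1)) + Ttx) * (v (Inl k) + v (Inr k)) + (v (Inl k) + v (Inr k))^2 / 2"
      for k :: nat and v :: "(nat + nat) \<Rightarrow> real"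
    have r: "fQ k (restrict (\<lambda>l. Z l \<omega>) {Inl (k - 1), Inl k, Inr k}) = Q k \<omega>" if "k \<ge> 1" for k \<omega>
      using that by (simp add: fQ_def Q_def Qk_def)
    have fm: "fQ k \<in> borel_measurable (PiM {Inl (k - 1), Inl k, Inr k} (\<lambda>_. borel))" for k
      unfolding fQ_def by measurable
    have "P.expectation (\<lambda>\<omega>. fQ i (restrict (\<lambda>l. Z l \<omega>) {Inl (i - 1), Inl i, Inr i}) * fQ j (restrict (\<lambda>l. Z l \<omega>) {Inl (j - 1), Inl j, Inr j}))
       = P.expectation (\<lambda>\<omega>. fQ i (restrict (\<lambda>l. Z l \<omega>) {Inl (i - 1), Inl i, Inr i})) * P.expectation (\<lambda>\<omega>. fQ j (restrict (\<lambda>l. Z l \<omega>) {Inl (j - 1), Inl j, Inr j}))"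
    proof (rule P.indep_restrict_integral[OF ind _ _ _ fm fm])
      show "integrable M (\<lambda>\<omega>. fQ i (restrict (\<lambda>l. Z l \<omega>) {Inl (i - 1), Inl i, Inr i}))"
        unfolding r[OF that(1)] using iQ[OF that(1)] by simp
      show "integrable M (\<lambda>\<omega>. fQ j (restrict (\<lambda>l. Z l \<omega>) {Inl (j - 1), Inl j, Inr j}))"
        unfolding r[OF j] using iQ[OF j] by simp
    qed (use that j in auto)
    note eq = this[unfolded r[OF that(1)] r[OF j]]
    show ?thesis using eq eQ[OF that(1)] eQ[OF j] by (simp add: power2_eq_square)
  qed
  have nnTT: "AE \<omega> in M. \<forall>k\<ge>1. 0 \<le> T k \<omega>"
    using nnX nnT by eventually_elim (auto simp: Tk)
  have nnQ: "AE \<omega> in M. \<forall>k\<ge>1. 0 \<le> Q k \<omega>"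
    using nnX nnT by eventually_elim (use c in \<open>auto simp: Q_def Qk_def\<close>)
  have VT: "integrable M (\<lambda>\<omega>. ((\<Sum>k\<in>{1..n}. T k \<omega>) - real n * mT)^2)
      \<and> P.expectation (\<lambda>\<omega>. ((\<Sum>k\<in>{1..n}. T k \<omega>) - real n * mT)^2) \<le> (3 * m2) * real n" for n
    by (rule P.var_bound[OF TMe iT2 eTT eq_refl[OF eTT2] uT])
  have VQ: "integrable M (\<lambda>\<omega>. ((\<Sum>k\<in>{1..n}. Q k \<omega>) - real n * q)^2)
      \<and> P.expectation (\<lambda>\<omega>. ((\<Sum>k\<in>{1..n}. Q k \<omega>) - real n * q)^2) \<le> (3 * BQ) * real n" for n
    by (rule P.var_bound[OF QMe iQ2 eQ eQ2 uQ])
  have LT: "AE \<omega> in M. (\<lambda>n. (\<Sum>k\<in>{1..n}. T k \<omega>) / real n) \<longlonglongrightarrow> mT"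
    by (rule P.slln_var[OF TMe nnTT]) (use VT in auto)
  have LQ: "AE \<omega> in M. (\<lambda>n. (\<Sum>k\<in>{1..n}. Q k \<omega>) / real n) \<longlonglongrightarrow> q"
    by (rule P.slln_var[OF QMe nnQ]) (use VQ in auto)
  have mT0: "mT > 0" unfolding mT_def a1_def b1_def using a b r by (intro add_pos_pos divide_pos_pos) auto
  have key: "q / mT = avg_aoi \<alpha> \<beta> \<rho> Ttx"
  proof -
    define D where "D = \<alpha> * \<rho> + \<beta>"
    have D: "D > 0" using a b r by (simp add: D_def add_pos_pos)
    have inner: "2 / \<rho>^2 + 2 * \<alpha> / (\<rho> * \<beta>) + (\<alpha>^2 + \<alpha>) / \<beta>^2 = m2"
      unfolding m2_def a1_def a2_def b1_def b2_def using b r by (simp add: field_simps power2_eq_square)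
    have mTD: "mT = D / (\<beta> * \<rho>)"
      unfolding mT_def a1_def b1_def D_def using b r by (simp add: field_simps)
    have "q / mT = a1 + Ttx + m2 / (2 * mT)"
      unfolding q_def using mT0 by (simp add: field_simps)
    also have "m2 / (2 * mT) = \<rho> * \<beta> / (2 * D) * m2"
      unfolding mTD using b r D by (simp add: field_simps)
    finally show ?thesis
      unfolding avg_aoi_def inner D_def[symmetric] by (simp add: a1_def algebra_simps)
  qed
  have part1: "AE \<omega> in M.
           ((\<lambda>\<tau>. (1 / \<tau>) * integral {0..\<tau>} (aoi (\<lambda>k. X k \<omega>) (\<lambda>k. Tint k \<omega>) Ttx))
              \<longlongrightarrow> avg_aoi \<alpha> \<beta> \<rho> Ttx) at_top"
    using nnX nnT LT LQ
  proof eventually_elim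
    case (elim \<omega>)
    have s1: "upd_time (\<lambda>k. X k \<omega>) (\<lambda>k. Tint k \<omega>) n = (\<Sum>k\<in>{1..n}. T k \<omega>)" for n
      unfolding upd_time_def by (rule sum.cong) (auto simp: Tk)
    have s2: "(\<Sum>k\<in>{1..n}. Qk (\<lambda>k. X k \<omega>) (\<lambda>k. Tint k \<omega>) Ttx k) = (\<Sum>k\<in>{1..n}. Q k \<omega>)" for n
      by (rule sum.cong) (auto simp: Q_def)
    have "((\<lambda>\<tau>. (1 / \<tau>) * integral {0..\<tau>} (aoi (\<lambda>k. X k \<omega>) (\<lambda>k. Tint k \<omega>) Ttx)) \<longlongrightarrow> q / mT) at_top"
    proof (rule renewal_limit)
      show "0 \<le> X k \<omega> + Tint k \<omega>" if "k \<ge> 1" for k using elim(1,2) that by auto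
      show "0 \<le> X k \<omega>" for k using elim(1) by auto
      show "0 \<le> Ttx" by (rule c)
      show "(\<lambda>n. upd_time (\<lambda>k. X k \<omega>) (\<lambda>k. Tint k \<omega>) n / real n) \<longlonglongrightarrow> mT"
        unfolding s1 by (rule elim(3))
      show "mT > 0" by (rule mT0)
      show "(\<lambda>n. (\<Sum>k\<in>{1..n}. Qk (\<lambda>k. X k \<omega>) (\<lambda>k. Tint k \<omega>) Ttx k) / real n) \<longlonglongrightarrow> q"
        unfolding s2 by (rule elim(4))
    qed
    then show ?case by (simp add: key)
  qed
  have part2: "avg_aoi \<alpha> \<beta> \<rho> Ttx =
            prob_space.expectation M
              (\<lambda>\<omega>. (peak_aoi (\<lambda>j. X j \<omega>) (\<lambda>j. Tint j \<omega>) Ttx k ^ 2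
                     - (X (k - 1) \<omega> + Ttx) ^ 2) / 2)
            / prob_space.expectation M (\<lambda>\<omega>. X k \<omega> + Tint k \<omega>)" if k: "k \<ge> 1" for k
  proof -
    have "(\<lambda>\<omega>. (peak_aoi (\<lambda>j. X j \<omega>) (\<lambda>j. Tint j \<omega>) Ttx k ^ 2 - (X (k - 1) \<omega> + Ttx) ^ 2) / 2) = Q k"
      using k by (auto simp: fun_eq_iff peak_aoi_def Q_def Qk_def power2_eq_square algebra_simps)
    moreover have "(\<lambda>\<omega>. X k \<omega> + Tint k \<omega>) = T k" using Teq[OF k] by simp
    ultimately show ?thesis using eQ[OF k] eTT[OF k] key by simp
  qed
  show ?thesis using part1 part2 by blast
qed


end
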